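(* Let $k,\ell,n$ be integers with $2\le \ell<k/2$ and $n\ge1$, and let the sets $A_i,B_i,U_i$, $V$ and the $k$-graph $H_1^2$ be as in the context. Then every $(\ell,k)$-path all of whose edges belong to $H_1^2$ has at most two edges.
   Context: Let $\{A_i,B_i: i=1,\dots,2n\}$ be $4n$ pairwise disjoint finite sets with $|A_i|=2\lfloor k/2\rfloor+\ell$ for $1\le i\le n$ and $|A_i|=2k-2\ell-3$ for $n+1\le i\le 2n$. Put $U_i=A_i\cup B_i$ and $V=\bigcup_{i=1}^{2n}U_i$. For $S\subseteq V$ let $tr(S)=\{i: S\cap U_i\ne\emptyset\}$. Define $H_1^2$ as the set of all $k$-subsets $e\subseteq V$ for which there is $i\in\{1,\dots,n\}$ with $tr(e)=\{i,n+i\}$, $|A_i\cap e|=\ell+1$ and $|A_{n+i}\cap e|=k-\ell-1$. An $(\ell,k)$-path is a $k$-graph with distinct vertices $v_1,\dots,v_s$, $s\equiv\ell\pmod{k-\ell}$, $s\ge k$, and edges $\{v_{i(k-\ell)+1},\dots,v_{i(k-\ell)+k}\}$, $i=0,\dots,(s-k)/(k-\ell)$. *)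

theory Defs
  imports Main
begin

definition Uset :: "(nat \<Rightarrow> 'a set) \<Rightarrow> (nat \<Rightarrow> 'a set) \<Rightarrow> nat \<Rightarrow> 'a set" where
  "Uset A B i = A i \<union> B i"

definition Vset :: "nat \<Rightarrow> (nat \<Rightarrow> 'a set) \<Rightarrow> (nat \<Rightarrow> 'a set) \<Rightarrow> 'a set" where
  "Vset n A B = (\<Union>i\<in>{1..2*n}. Uset A B i)"

definition tr :: "nat \<Rightarrow> (nat \<Rightarrow> 'a set) \<Rightarrow> (nat \<Rightarrow> 'a set) \<Rightarrow> 'a set \<Rightarrow> nat set" where
  "tr n A B S = {i\<in>{1..2*n}. S \<inter> Uset A B i \<noteq> {}}"

definition H12 :: "nat \<Rightarrow> nat \<Rightarrow> nat \<Rightarrow> (nat \<Rightarrow> 'a set) \<Rightarrow> (nat \<Rightarrow> 'a set) \<Rightarrow> 'a set set" where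
  "H12 k l n A B = {e. e \<subseteq> Vset n A B \<and> finite e \<and> card e = k \<and>
      (\<exists>i\<in>{1..n}. tr n A B e = {i, n+i} \<and> card (A i \<inter> e) = l+1
                    \<and> card (A (n+i) \<inter> e) = k-l-1)}"

text \<open>An (l,k)-path given by its vertex sequence vs = [v_1,...,v_s] (0-based list).\<close>
definition is_lk_path :: "nat \<Rightarrow> nat \<Rightarrow> 'a list \<Rightarrow> bool" where
  "is_lk_path l k vs \<longleftrightarrow> distinct vs \<and> length vs \<ge> k \<and>
      length vs mod (k-l) = l mod (k-l)"

definition path_edges :: "nat \<Rightarrow> nat \<Rightarrow> 'a list \<Rightarrow> 'a set set" where
  "path_edges l k vs =
     (\<lambda>i. set (take k (drop (i*(k-l)) vs))) ` {0..(length vs - k) div (k-l)}"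

end

theory Submission
  imports Defs
begin

lemma mem_seg:
  assumes "i < k" "d + i < length vs"
  shows "vs ! (d+i) \<in> set (take k (drop d vs))"
proof -
  have "i < length (take k (drop d vs))" using assms by simp
  hence "take k (drop d vs) ! i \<in> set (take k (drop d vs))" by (rule nth_mem)
  moreover have "take k (drop d vs) ! i = vs ! (d+i)" using assms by simp
  ultimately show ?thesis by simp
qed

lemma seg_mem:
  assumes "x \<in> set (take k (drop d vs))"
  shows "\<exists>p. d \<le> p \<and> p < d + k \<and> p < length vs \<and> vs ! p = x"
proof -
  obtain i where "i < length (take k (drop d vs))" "take k (drop d vs) ! i = x"
    using assms by (auto simp: in_set_conv_nth)
  thus ?thesis by (intro exI[of _ "d+i"]) auto
qed

lemma H12_sub:
  assumes "e \<in> H12 k l n A B" "2*l < k"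
    and fin: "\<forall>i\<in>{1..2*n}. finite (A i) \<and> finite (B i)"
    and dis: "\<forall>i\<in>{1..2*n}. \<forall>j\<in>{1..2*n}. i \<noteq> j \<longrightarrow> A i \<inter> A j = {} \<and> B i \<inter> B j = {}"
  shows "\<exists>i\<in>{1..n}. e \<subseteq> A i \<union> A (n+i) \<and> card (A (n+i) \<inter> e) = k-l-1"
proof -
  from assms(1) obtain i where i: "i \<in> {1..n}" and fe: "finite e" and ce: "card e = k"
    and c1: "card (A i \<inter> e) = l+1" and c2: "card (A (n+i) \<inter> e) = k-l-1"
    unfolding H12_def by blast
  have "A i \<inter> A (n+i) = {}" using dis i by force
  hence "card ((A i \<inter> e) \<union> (A (n+i) \<inter> e)) = card (A i \<inter> e) + card (A (n+i) \<inter> e)"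
    using fe by (intro card_Un_disjoint) auto
  also have "\<dots> = card e" using c1 c2 ce assms(2) by simp
  finally have "card ((A i \<inter> e) \<union> (A (n+i) \<inter> e)) = card e" .
  hence "(A i \<inter> e) \<union> (A (n+i) \<inter> e) = e" using fe
    by (intro card_subset_eq) auto
  hence "e \<subseteq> A i \<union> A (n+i)" by blast
  thus ?thesis using i c2 by blast
qed

theorem fact3p1:
  fixes k l n :: nat and A B :: "nat \<Rightarrow> 'a set" and vs :: "'a list"
  assumes "2 \<le> l" and "2*l < k" and "1 \<le> n"
    and "\<forall>i\<in>{1..2*n}. finite (A i) \<and> finite (B i)"
    and "\<forall>i\<in>{1..2*n}. \<forall>j\<in>{1..2*n}. A i \<inter> B j = {}"
    and "\<forall>i\<in>{1..2*n}. \<forall>j\<in>{1..2*n}. i \<noteq> j \<longrightarrow> A i \<inter> A j = {} \<and> B i \<inter> B j = {}"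
    and "\<forall>i\<in>{1..n}. card (A i) = 2*(k div 2) + l"
    and "\<forall>i\<in>{n+1..2*n}. card (A i) = 2*k - 2*l - 3"
    and "is_lk_path l k vs"
    and "path_edges l k vs \<subseteq> H12 k l n A B"
  shows "card (path_edges l k vs) \<le> 2"
proof (rule ccontr)
  assume nc: "\<not> card (path_edges l k vs) \<le> 2"
  define m where "m = (length vs - k) div (k-l)"
  define E where "E j = set (take k (drop (j*(k-l)) vs))" for j
  have pe: "path_edges l k vs = E ` {0..m}" unfolding path_edges_def E_def m_def by simp
  have "card (path_edges l k vs) \<le> m + 1" unfolding pe
    using card_image_le[of "{0..m}" E] by simp
  hence m2: "2 \<le> m" using nc by simp
  have kl: "0 < k - l" using assms(2) by simp
  have "2 * (k-l) \<le> m * (k-l)" using m2 by simp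
  also have "\<dots> \<le> length vs - k" unfolding m_def by simp
  finally have len: "3*k - 2*l \<le> length vs" using assms(2) by (simp add: diff_mult_distrib2)
  have EH: "E j \<in> H12 k l n A B" if "j \<le> 2" for j
    using assms(10) m2 that unfolding pe by auto
  have dv: "distinct vs" using assms(9) unfolding is_lk_path_def by simp
  have a1: "k - l < k" using assms(1,2) by simp
  have a2: "2*(k-l) + (k-l) \<le> length vs" using len assms(2) by simp
  have a3: "0 < k" using assms(2) by simp
  have x01: "vs ! (0*(k-l) + (k-l)) \<in> E 0" unfolding E_def
    by (rule mem_seg) (use a1 a2 a3 kl in simp_all)
  have x01': "vs ! (1*(k-l) + 0) \<in> E 1" unfolding E_def
    by (rule mem_seg) (use a1 a2 a3 kl in simp_all)
  have x12: "vs ! (1*(k-l) + (k-l)) \<in> E 1" unfolding E_def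
    by (rule mem_seg) (use a1 a2 a3 kl in simp_all)
  have x12': "vs ! (2*(k-l) + 0) \<in> E 2" unfolding E_def
    by (rule mem_seg) (use a1 a2 a3 kl in simp_all)
  have n01: "E 0 \<inter> E 1 \<noteq> {}" using x01 x01' by auto
  have e: "1*(k-l) + (k-l) = 2*(k-l) + 0" by simp
  have n12: "E 1 \<inter> E 2 \<noteq> {}" using x12 x12' unfolding e by blast
  have d02: "E 0 \<inter> E 2 = {}"
  proof (rule ccontr)
    assume "E 0 \<inter> E 2 \<noteq> {}"
    then obtain x where "x \<in> E 0" "x \<in> E 2" by blast
    then obtain p q where p: "p < k" "p < length vs" "vs ! p = x"
      and q: "2*(k-l) \<le> q" "q < length vs" "vs ! q = x"
      unfolding E_def using seg_mem[of x k "0*(k-l)" vs] seg_mem[of x k "2*(k-l)" vs] by force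
    have "p = q" using dv p q nth_eq_iff_index_eq by metis
    thus False using p q assms(2) by simp
  qed
  obtain i0 where i0: "i0 \<in> {1..n}" "E 0 \<subseteq> A i0 \<union> A (n+i0)" "card (A (n+i0) \<inter> E 0) = k-l-1"
    using H12_sub[OF EH[of 0] assms(2,4,6)] by auto
  obtain i1 where i1: "i1 \<in> {1..n}" "E 1 \<subseteq> A i1 \<union> A (n+i1)"
    using H12_sub[OF EH[of 1] assms(2,4,6)] by auto
  obtain i2 where i2: "i2 \<in> {1..n}" "E 2 \<subseteq> A i2 \<union> A (n+i2)" "card (A (n+i2) \<inter> E 2) = k-l-1"
    using H12_sub[OF EH[of 2] assms(2,4,6)] by auto
  have same: "i = j" if "i \<in> {1..n}" "j \<in> {1..n}" "X \<subseteq> A i \<union> A (n+i)"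
    "Y \<subseteq> A j \<union> A (n+j)" "X \<inter> Y \<noteq> {}" for i j X Y
  proof (rule ccontr)
    assume ij: "i \<noteq> j"
    have "A i \<inter> A j = {}" "A i \<inter> A (n+j) = {}" "A (n+i) \<inter> A j = {}" "A (n+i) \<inter> A (n+j) = {}"
      using assms(6) that(1,2) ij by auto
    thus False using that(3,4,5) by blast
  qed
  have "i0 = i1" using same[OF i0(1) i1(1) i0(2) i1(2) n01] .
  moreover have "i1 = i2" using same[OF i1(1) i2(1) i1(2) i2(2) n12] .
  ultimately have "i0 = i2" by simp
  let ?X = "A (n+i0)"
  have finX: "finite ?X" using assms(4) i0(1) by auto
  have "card (?X \<inter> E 0) + card (?X \<inter> E 2) = card ((?X \<inter> E 0) \<union> (?X \<inter> E 2))"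
    using d02 finX by (intro card_Un_disjoint[symmetric]) auto
  also have "\<dots> \<le> card ?X" using finX by (intro card_mono) auto
  also have "\<dots> = 2*k - 2*l - 3" using assms(8) i0(1) by auto
  finally show False using i0(3) i2(3) \<open>i0 = i2\<close> assms(1,2) by simp
qed

end
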